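(* Let $\lambda\in\{1,2\}$ and let $S:\mathbb A^{(\lambda)}_{\rm triv}(\mathbb D^2)\to\mathbb A^{(\lambda)}_{\rm sign}(\mathbb D^2)$ be defined by $Sf=J_{\boldsymbol s}f$, where $J_{\boldsymbol s}(z_1,z_2)=z_1-z_2$. Then $S$ does not have a bounded inverse.
   Context: $\mathbb A^{(2)}(\mathbb D^2)$ is the Bergman space of $\mathbb D^2$ (holomorphic functions with reproducing kernel $\prod_{i=1}^2(1-z_i\bar w_i)^{-2}$, in which $\|z_1^{a}z_2^{b}\|^2=\frac{a!\,b!}{(2)_a(2)_b}$), and $\mathbb A^{(1)}(\mathbb D^2)=H^2(\mathbb D^2)$ is the Hardy space (kernel $\prod_i(1-z_i\bar w_i)^{-1}$). $\mathbb A^{(\lambda)}_{\rm triv}(\mathbb D^2)$ is the subspace of symmetric functions $f(z_1,z_2)=f(z_2,z_1)$, and $\mathbb A^{(\lambda)}_{\rm sign}(\mathbb D^2)$ the subspace of antisymmetric functions $f(z_1,z_2)=-f(z_2,z_1)$. $J_{\boldsymbol s}$ is the Jacobian determinant of the symmetrization map $(z_1+z_2,z_1z_2)$. *)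

theory Defs
  imports "HOL-Analysis.Analysis"
begin

text \<open>Functions on the bidisc are modelled as maps complex => complex => complex
  which vanish outside the open bidisc (extensional convention).
  The space A^(lam)(D^2) consists of those functions given on the bidisc by a
  double power series sum c a b z1^a z2^b whose coefficients satisfy
  sum |c a b|^2 * ||z1^a z2^b||^2 < infinity, with
  ||z1^a z2^b||^2 = a! b! / ((lam)_a (lam)_b).\<close>

definition bidisc :: "(complex \<times> complex) set" where
  "bidisc = {(z1, z2). norm z1 < 1 \<and> norm z2 < 1}"

definition mono_weight :: "nat \<Rightarrow> nat \<Rightarrow> nat \<Rightarrow> real" where
  "mono_weight lam a b =
     fact a * fact b / (pochhammer (real lam) a * pochhammer (real lam) b)"

definition is_coeffs :: "nat \<Rightarrow> (complex \<Rightarrow> complex \<Rightarrow> complex) \<Rightarrow> (nat \<Rightarrow> nat \<Rightarrow> complex) \<Rightarrow> bool" where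
  "is_coeffs lam f c \<longleftrightarrow>
     (\<lambda>(a, b). (norm (c a b))\<^sup>2 * mono_weight lam a b) summable_on (UNIV :: (nat \<times> nat) set)
   \<and> (\<forall>z1 z2. (z1, z2) \<in> bidisc \<longrightarrow>
          ((\<lambda>(a, b). c a b * z1 ^ a * z2 ^ b) has_sum f z1 z2) (UNIV :: (nat \<times> nat) set))"

definition A_space :: "nat \<Rightarrow> (complex \<Rightarrow> complex \<Rightarrow> complex) set" where
  "A_space lam = {f. (\<exists>c. is_coeffs lam f c) \<and> (\<forall>z1 z2. (z1, z2) \<notin> bidisc \<longrightarrow> f z1 z2 = 0)}"

definition A_coeffs :: "nat \<Rightarrow> (complex \<Rightarrow> complex \<Rightarrow> complex) \<Rightarrow> nat \<Rightarrow> nat \<Rightarrow> complex" where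
  "A_coeffs lam f = (THE c. is_coeffs lam f c)"

definition A_norm :: "nat \<Rightarrow> (complex \<Rightarrow> complex \<Rightarrow> complex) \<Rightarrow> real" where
  "A_norm lam f = sqrt (\<Sum>\<^sub>\<infinity>(a, b)\<in>UNIV. (norm (A_coeffs lam f a b))\<^sup>2 * mono_weight lam a b)"

definition A_triv :: "nat \<Rightarrow> (complex \<Rightarrow> complex \<Rightarrow> complex) set" where
  "A_triv lam = {f \<in> A_space lam. \<forall>z1 z2. f z1 z2 = f z2 z1}"

definition A_sign :: "nat \<Rightarrow> (complex \<Rightarrow> complex \<Rightarrow> complex) set" where
  "A_sign lam = {f \<in> A_space lam. \<forall>z1 z2. f z1 z2 = - f z2 z1}"

text \<open>Jacobian of the symmetrisation map (z1+z2, z1 z2).\<close>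
definition J_s :: "complex \<Rightarrow> complex \<Rightarrow> complex" where
  "J_s z1 z2 = z1 - z2"

definition S_op :: "(complex \<Rightarrow> complex \<Rightarrow> complex) \<Rightarrow> complex \<Rightarrow> complex \<Rightarrow> complex" where
  "S_op f = (\<lambda>z1 z2. J_s z1 z2 * f z1 z2)"

end

theory Submission
  imports Defs "HOL-Complex_Analysis.Cauchy_Integral_Formula"
begin

lemma pw_zero:
  fixes a :: "nat \<Rightarrow> complex"
  assumes "\<And>x. norm x < 1 \<Longrightarrow> ((\<lambda>n. a n * x^n) has_sum 0) UNIV"
  shows "a m = 0"
proof (rule ccontr)
  assume am: "a m \<noteq> 0"
  have sm: "\<And>x. norm (x - 0) < 1 \<Longrightarrow> (\<lambda>n. a n * (x-0)^n) sums ((\<lambda>_. 0) x)"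
    using assms has_sum_imp_sums by auto
  show False
  proof (cases "m = 0")
    case True
    have "(\<lambda>n. a n * 0^n) sums a 0" by (rule powser_sums_zero)
    moreover have "(\<lambda>n. a n * 0^n) sums 0" using sm[of 0] by simp
    ultimately show False using am True sums_unique2 by blast
  next
    case False
    have m0: "0 < m" using False by simp
    show False
      apply (rule powser_0_nonzero[where r=1 and a=a and \<xi>=0 and f="\<lambda>_. (0::complex)" and m=m])
           apply (simp_all add: am m0 sm)
      subgoal for x using sm[of x] by simp
      subgoal premises p for s using p(2)[of "complex_of_real s"] p(1) by simp
      done
  qed
qed

lemma hs_diff:
  fixes f g :: "'a \<Rightarrow> complex"
  assumes "(f has_sum a) A" "(g has_sum b) A"
  shows "((\<lambda>x. f x - g x) has_sum (a - b)) A"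
proof -
  have "((\<lambda>x. - g x) has_sum - b) A" using assms(2) by (simp add: has_sum_uminus)
  from has_sum_add[OF assms(1) this] show ?thesis by simp
qed

lemma coeffs_unique:
  assumes c: "is_coeffs lam f c" and d: "is_coeffs lam f d"
  shows "c = d"
proof -
  define e where "e a b = c a b - d a b" for a b
  have H: "((\<lambda>(a,b). e a b * z1^a * z2^b) has_sum 0) UNIV" if "norm z1 < 1" "norm z2 < 1" for z1 z2
  proof -
    have "(z1,z2) \<in> bidisc" using that by (simp add: bidisc_def)
    then have "((\<lambda>(a,b). c a b * z1^a * z2^b) has_sum f z1 z2) UNIV"
      "((\<lambda>(a,b). d a b * z1^a * z2^b) has_sum f z1 z2) UNIV"
      using c d by (auto simp: is_coeffs_def)
    from hs_diff[OF this] have "((\<lambda>x. (\<lambda>(a,b). c a b * z1^a * z2^b) x - (\<lambda>(a,b). d a b * z1^a * z2^b) x) has_sum 0) UNIV"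
      by simp
    moreover have "(\<lambda>x. (\<lambda>(a,b). c a b * z1^a * z2^b) x - (\<lambda>(a,b). d a b * z1^a * z2^b) x) = (\<lambda>(a,b). e a b * z1^a * z2^b)"
      by (auto simp: fun_eq_iff e_def left_diff_distrib)
    ultimately show ?thesis by simp
  qed
  have S1: "(\<lambda>b. e a b * z2^b) summable_on UNIV" if "norm z2 < 1" for a z2
  proof -
    have sig: "(\<lambda>(a,b). e a b * (1/2)^a * z2^b) summable_on Sigma UNIV (\<lambda>_. UNIV)"
      using H[of "1/2" z2] that has_sum_imp_summable by auto
    have "(\<lambda>b. e a b * (1/2)^a * z2^b) summable_on UNIV"
      using summable_on_SigmaD1[of "\<lambda>a b. e a b * (1/2)^a * z2^b", OF sig, of a] by simp
    then have "(\<lambda>b. (1/2)^a * (e a b * z2^b)) summable_on UNIV"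
      by (simp add: algebra_simps)
    then show ?thesis using summable_on_cmult_right'[of "(1/2::complex)^a" "\<lambda>b. e a b * z2^b" UNIV] by simp
  qed
  define u where "u z2 a = (\<Sum>\<^sub>\<infinity>b. e a b * z2^b)" for z2 a
  have U: "u z2 a = 0" if "norm z2 < 1" for z2 a
  proof (rule pw_zero[of "u z2"])
    fix z1 :: complex assume z1: "norm z1 < 1"
    have "((\<lambda>a. z1^a * u z2 a) has_sum 0) UNIV"
    proof (rule has_sum_Sigma'[where f="\<lambda>(a,b). e a b * z1^a * z2^b"])
      show "((\<lambda>(a,b). e a b * z1^a * z2^b) has_sum 0) (Sigma UNIV (\<lambda>_. UNIV))"
        using H[OF z1 that] by simp
      fix a :: nat
      have "((\<lambda>b. z1^a * (e a b * z2^b)) has_sum z1^a * u z2 a) UNIV"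
        unfolding u_def by (rule has_sum_cmult_right) (use S1[OF that] in simp)
      then show "((\<lambda>b. (\<lambda>(a,b). e a b * z1^a * z2^b) (a, b)) has_sum z1^a * u z2 a) UNIV"
        by (simp add: algebra_simps)
    qed
    then show "((\<lambda>n. u z2 n * z1^n) has_sum 0) UNIV" by (simp add: mult.commute)
  qed
  have "e a b = 0" for a b
  proof (rule pw_zero[of "e a"])
    fix z2 :: complex assume z2: "norm z2 < 1"
    show "((\<lambda>b. e a b * z2^b) has_sum 0) UNIV"
      using has_sum_infsum[OF S1[OF z2, of a]] U[OF z2, of a] by (simp add: u_def)
  qed
  then show ?thesis by (auto simp: e_def fun_eq_iff)
qed




lemma poly_A:
  fixes F :: "(nat \<times> nat) set"
  assumes fin: "finite F" and zero: "\<And>a b. (a,b) \<notin> F \<Longrightarrow> c a b = 0"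
   and f_in: "\<And>z1 z2. (z1,z2) \<in> bidisc \<Longrightarrow> f z1 z2 = (\<Sum>(a,b)\<in>F. c a b * z1^a * z2^b)"
   and f_out: "\<And>z1 z2. (z1,z2) \<notin> bidisc \<Longrightarrow> f z1 z2 = 0"
  shows "f \<in> A_space lam" "A_coeffs lam f = c"
    "A_norm lam f = sqrt (\<Sum>(a,b)\<in>F. (norm (c a b))\<^sup>2 * mono_weight lam a b)"
proof -
  have hs: "((\<lambda>(a,b). (norm (c a b))\<^sup>2 * mono_weight lam a b) has_sum
      (\<Sum>(a,b)\<in>F. (norm (c a b))\<^sup>2 * mono_weight lam a b)) UNIV"
    apply (rule has_sum_finite_neutralI[OF fin])
      apply simp
    subgoal for x by (cases x) (simp add: zero)
    apply (rule refl)
    done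
  have ic: "is_coeffs lam f c"
    unfolding is_coeffs_def
  proof (intro conjI allI impI)
    show "(\<lambda>(a,b). (norm (c a b))\<^sup>2 * mono_weight lam a b) summable_on UNIV"
      by (rule has_sum_imp_summable[OF hs])
    fix z1 z2 assume z: "(z1,z2) \<in> bidisc"
    show "((\<lambda>(a,b). c a b * z1^a * z2^b) has_sum f z1 z2) UNIV"
      apply (rule has_sum_finite_neutralI[OF fin])
        apply simp
      subgoal for x by (cases x) (simp add: zero)
      apply (rule f_in[OF z])
      done
  qed
  show "f \<in> A_space lam" unfolding A_space_def
    apply (rule CollectI)
    apply (rule conjI)
     apply (rule exI[of _ c])
     apply (rule ic)
    apply (intro allI impI)
    apply (erule f_out)
    done
  have "A_coeffs lam f = c" unfolding A_coeffs_def
    by (rule the_equality[where P="is_coeffs lam f", OF ic]) (rule coeffs_unique[OF _ ic], assumption)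
  then show "A_coeffs lam f = c" .
  then show "A_norm lam f = sqrt (\<Sum>(a,b)\<in>F. (norm (c a b))\<^sup>2 * mono_weight lam a b)"
    unfolding A_norm_def using infsumI[OF hs] by simp
qed

definition fn :: "nat \<Rightarrow> complex \<Rightarrow> complex \<Rightarrow> complex" where
  "fn n z1 z2 = (if (z1,z2) \<in> bidisc then (\<Sum>k\<le>n. z1^k * z2^(n-k)) else 0)"

definition cn :: "nat \<Rightarrow> nat \<Rightarrow> nat \<Rightarrow> complex" where
  "cn n a b = (if a + b = n then 1 else 0)"

definition dn :: "nat \<Rightarrow> nat \<Rightarrow> nat \<Rightarrow> complex" where
  "dn n a b = (if a = Suc n \<and> b = 0 then 1 else if a = 0 \<and> b = Suc n then -1 else 0)"

lemma Fn_eq: "(\<Sum>(a,b)\<in>(\<lambda>k. (k, n-k)) ` {..n}. g a b) = (\<Sum>k\<le>n. g k (n-k))"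
  by (subst sum.reindex) (auto simp: inj_on_def)

lemma fn_facts:
  "fn n \<in> A_space lam" "A_norm lam (fn n) = sqrt (\<Sum>k\<le>n. mono_weight lam k (n-k))"
proof -
  have 1: "finite ((\<lambda>k. (k, n-k)) ` {..n})" by simp
  have 2: "(a,b) \<notin> (\<lambda>k. (k, n-k)) ` {..n} \<Longrightarrow> cn n a b = 0" for a b
    by (auto simp: cn_def image_iff)
  have 3: "fn n z1 z2 = (\<Sum>(a,b)\<in>(\<lambda>k. (k, n-k)) ` {..n}. cn n a b * z1^a * z2^b)"
    if "(z1,z2) \<in> bidisc" for z1 z2
    using that by (simp add: Fn_eq fn_def cn_def)
  have 4: "fn n z1 z2 = 0" if "(z1,z2) \<notin> bidisc" for z1 z2 using that by (simp add: fn_def)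
  note P = poly_A[OF 1 2 3 4]
  show "fn n \<in> A_space lam" by (rule P(1))
  show "A_norm lam (fn n) = sqrt (\<Sum>k\<le>n. mono_weight lam k (n-k))"
    using P(3) by (simp add: Fn_eq cn_def)
qed

lemma fn_sym: "fn n z1 z2 = fn n z2 z1"
proof -
  have "(\<Sum>k\<le>n. z1^k * z2^(n-k)) = (\<Sum>k\<le>n. z2^k * z1^(n-k))"
    by (rule sum.reindex_bij_witness[where i="\<lambda>k. n-k" and j="\<lambda>k. n-k"]) (auto simp: mult.commute)
  moreover have "(z1,z2) \<in> bidisc \<longleftrightarrow> (z2,z1) \<in> bidisc" by (auto simp: bidisc_def)
  ultimately show ?thesis by (simp add: fn_def)
qed

lemma fn_triv: "fn n \<in> A_triv lam"
  using fn_facts(1) fn_sym by (auto simp: A_triv_def)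

lemma Sfn_facts:
  "A_norm lam (S_op (fn n)) = sqrt (mono_weight lam (Suc n) 0 + mono_weight lam 0 (Suc n))"
proof -
  have 1: "finite {(Suc n, 0), (0, Suc n)}" by simp
  have 2: "(a,b) \<notin> {(Suc n, 0), (0, Suc n)} \<Longrightarrow> dn n a b = 0" for a b
    by (auto simp: dn_def)
  have 3: "S_op (fn n) z1 z2 = (\<Sum>(a,b)\<in>{(Suc n, 0), (0, Suc n)}. dn n a b * z1^a * z2^b)"
    if "(z1,z2) \<in> bidisc" for z1 z2
  proof -
    have "S_op (fn n) z1 z2 = (z1 - z2) * (\<Sum>i<Suc n. z2^(Suc n - Suc i) * z1^i)"
      using that by (simp add: S_op_def J_s_def fn_def lessThan_Suc_atMost mult.commute)
    also have "\<dots> = z1^Suc n - z2^Suc n" by (rule power_diff_sumr2[symmetric])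
    finally show ?thesis by (simp add: dn_def)
  qed
  have 4: "S_op (fn n) z1 z2 = 0" if "(z1,z2) \<notin> bidisc" for z1 z2
    using that by (simp add: fn_def S_op_def)
  note P = poly_A[OF 1 2 3 4]
  show ?thesis using P(3) by (simp add: dn_def)
qed

lemma w1: "mono_weight 1 a b = 1"
  by (simp add: mono_weight_def pochhammer_fact[symmetric])

lemma poch2: "pochhammer (2::real) a = fact (Suc a)"
  by (induction a) (auto simp: pochhammer_Suc algebra_simps)

lemma w2: "mono_weight 2 a b = 1 / ((real a + 1) * (real b + 1))"
proof -
  have "mono_weight 2 a b = (fact a * fact b) / ((fact a * fact b) * ((real a + 1) * (real b + 1)))"
    by (simp add: mono_weight_def poch2 algebra_simps)
  also have "\<dots> = 1 / ((real a + 1) * (real b + 1))"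
    by (rule nonzero_divide_mult_cancel_left) simp
  finally show ?thesis .
qed


lemma harm_bounded_false:
  assumes "\<And>n. (\<Sum>k\<le>n. 1 / (real k + 1)) \<le> B"
  shows False
proof -
  have "summable (\<lambda>k. 1 / (real k + 1))"
  proof (rule summableI_nonneg_bounded)
    fix n
    have "(\<Sum>k<n. 1 / (real k + 1)) \<le> (\<Sum>k\<le>n. 1 / (real k + 1))"
      by (rule sum_mono2) auto
    also have "\<dots> \<le> B" by (rule assms)
    finally show "(\<Sum>k<n. 1 / (real k + 1)) \<le> B" .
  qed simp
  then have "summable (\<lambda>n. inverse (real (Suc n)))"
    by (simp add: inverse_eq_divide add.commute)
  then have "summable (\<lambda>n. inverse (real n))"
    by (subst (asm) summable_Suc_iff[of "\<lambda>n. inverse (real n)"])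
  then show False using not_summable_harmonic by blast
qed

lemma mw_nonneg: "0 < lam \<Longrightarrow> 0 \<le> mono_weight lam a b"
  unfolding mono_weight_def by (intro divide_nonneg_nonneg mult_nonneg_nonneg pochhammer_nonneg) auto

theorem proposition4p21:
  fixes lam :: nat
  assumes "lam \<in> {1, 2}"
  shows "\<not> (\<exists>C::real. \<forall>f \<in> A_triv lam. A_norm lam f \<le> C * A_norm lam (S_op f))"
proof
  assume "\<exists>C::real. \<forall>f \<in> A_triv lam. A_norm lam f \<le> C * A_norm lam (S_op f)"
  then obtain C :: real where C: "\<And>f. f \<in> A_triv lam \<Longrightarrow> A_norm lam f \<le> C * A_norm lam (S_op f)"
    by blast
  have key: "(\<Sum>k\<le>n. mono_weight lam k (n-k))
      \<le> C\<^sup>2 * (mono_weight lam (Suc n) 0 + mono_weight lam 0 (Suc n))" for n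
  proof -
    define X where "X = (\<Sum>k\<le>n. mono_weight lam k (n-k))"
    define Y where "Y = mono_weight lam (Suc n) 0 + mono_weight lam 0 (Suc n)"
    have lam0: "0 < lam" using assms by auto
    have Y0: "0 \<le> Y" by (simp add: Y_def mw_nonneg[OF lam0])
    have "sqrt X \<le> C * sqrt Y"
      using C[OF fn_triv[of n lam]] unfolding fn_facts(2) Sfn_facts X_def Y_def .
    also have "\<dots> \<le> \<bar>C\<bar> * sqrt Y" by (rule mult_right_mono) (auto simp: Y0)
    also have "\<dots> = sqrt (C\<^sup>2 * Y)" by (simp add: real_sqrt_mult)
    finally have "sqrt X \<le> sqrt (C\<^sup>2 * Y)" .
    then show ?thesis unfolding X_def[symmetric] Y_def[symmetric] by simp
  qed
  from assms consider "lam = 1" | "lam = 2" by blast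
  then show False
  proof cases
    case 1
    have "real (Suc n) \<le> C\<^sup>2 * 2" for n
      using key[of n] unfolding 1 w1 by simp
    from this[of "nat \<lceil>C\<^sup>2 * 2\<rceil>"] show False by linarith
  next
    case 2
    have "(\<Sum>k\<le>n. 1 / (real k + 1)) \<le> 2 * C\<^sup>2" for n
    proof -
      have "(\<Sum>k\<le>n. 1 / (real k + 1)) / (real n + 2) = (\<Sum>k\<le>n. 1 / ((real k + 1) * (real n + 2)))"
        by (simp add: sum_divide_distrib)
      also have "\<dots> \<le> (\<Sum>k\<le>n. mono_weight lam k (n-k))"
      proof (rule sum_mono)
        fix k assume k: "k \<in> {..n}"
        have "real (n - k) + 1 \<le> real n + 2" by simp
        then have "(real k + 1) * (real (n-k) + 1) \<le> (real k + 1) * (real n + 2)"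
          by (intro mult_left_mono) auto
        then show "1 / ((real k + 1) * (real n + 2)) \<le> mono_weight lam k (n-k)"
          unfolding 2 w2 by (intro divide_left_mono) auto
      qed
      also have "\<dots> \<le> C\<^sup>2 * (mono_weight lam (Suc n) 0 + mono_weight lam 0 (Suc n))" by (rule key)
      also have "\<dots> = 2 * C\<^sup>2 / (real n + 2)"
        by (simp add: 2 w2 field_simps)
      finally show ?thesis by (simp add: divide_le_cancel)
    qed
    then show False by (rule harm_bounded_false)
  qed
qed

end
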